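(* Let $B\ge 2$ and $\eta\in\mathbb{N}$. Then $\mathcal{H}_B(\gamma_B(\eta+1))\le\gamma_B(\eta)+4(B-1)^2$.
   Context: Fix an integer base $B \geq 2$. Every integer $x>0$ is written uniquely as $x=\sum_{i=0}^{L(x)-1} x_i B^i$ with digits $0 \le x_i \le B-1$ and $x_{L(x)-1}\neq 0$. Define $\mathcal{H}_B(x)=\sum_{i=0}^{L(x)-1} x_i^2$, $\mathcal{H}_B(0)=0$, $\mathcal{H}_B^0(x)=x$, $\mathcal{H}_B^{n}=\mathcal{H}_B\circ\mathcal{H}_B^{n-1}$. A positive integer $x$ is happy if $\mathcal{H}_B^n(x)=1$ for some $n\in\mathbb{N}$; its height is $\eta_B(x)=\min\{\alpha\in\mathbb{N}:\mathcal{H}_B^\alpha(x)=1\}$. For $n\in\mathbb{N}$, $\gamma_B(n)$ denotes the smallest happy number $x\ge 1$ with $\eta_B(x)=n$. *)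

theory Defs
  imports Main
begin

text \<open>Sum of the squares of the base-B digits of x (H_B). For B < 2 it is set to 0
  (irrelevant: the theorem assumes B \<ge> 2).\<close>
function happyH :: "nat \<Rightarrow> nat \<Rightarrow> nat" where
  "happyH B x = (if x = 0 \<or> B < 2 then 0 else (x mod B)^2 + happyH B (x div B))"
  by pat_completeness auto
termination
  by (relation "measure (\<lambda>(B, x). x)") auto

definition happy :: "nat \<Rightarrow> nat \<Rightarrow> bool" where
  "happy B x \<longleftrightarrow> x > 0 \<and> (\<exists>n. (happyH B ^^ n) x = 1)"

definition height :: "nat \<Rightarrow> nat \<Rightarrow> nat" where
  "height B x = (LEAST a. (happyH B ^^ a) x = 1)"

definition gamma :: "nat \<Rightarrow> nat \<Rightarrow> nat" where
  "gamma B n = (LEAST x. x \<ge> 1 \<and> happy B x \<and> height B x = n)"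

end

theory Submission
  imports Defs "HOL-Computational_Algebra.Primes"
begin

definition sq4 :: "int \<Rightarrow> bool" where
  "sq4 n \<longleftrightarrow> (\<exists>a b c d. n = a^2+b^2+c^2+d^2)"

lemma euler_id:
  "((a::int)^2+b^2+c^2+d^2)*(w^2+x^2+y^2+z^2) =
    (a*w+b*x+c*y+d*z)^2 + (a*x-b*w+c*z-d*y)^2 + (a*y-b*z-c*w+d*x)^2 + (a*z+b*y-c*x-d*w)^2"
  by algebra

lemma sq4_mult: assumes "sq4 m" "sq4 n" shows "sq4 (m*n)"
proof -
  obtain a b c d where "m = a^2+b^2+c^2+d^2" using assms(1) sq4_def by blast
  moreover obtain w x y z where "n = w^2+x^2+y^2+z^2" using assms(2) sq4_def by blast
  ultimately show ?thesis unfolding sq4_def using euler_id by blast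
qed

lemma symres:
  fixes m x :: int assumes "m > 0" shows "\<exists>t. 4*(x - m*t)^2 \<le> m^2"
proof -
  define h where "h = m div 2"
  define t where "t = (x + h) div m"
  define u where "u = (x + h) mod m"
  have e: "m * t + u = x + h" unfolding t_def u_def by (rule mult_div_mod_eq)
  have u: "0 \<le> u" "u < m" unfolding u_def using assms by auto
  have hh: "2*h \<ge> m - 1" "2*h \<le> m" unfolding h_def by linarith+
  have xu: "x - m*t = u - h" using e by linarith
  have "-m \<le> 2*(u - h) \<and> 2*(u - h) \<le> m" using u hh by presburger
  hence "-m \<le> 2*(x - m*t) \<and> 2*(x - m*t) \<le> m" unfolding xu .
  hence "\<bar>2*(x - m*t)\<bar> \<le> \<bar>m\<bar>" using assms by (simp add: abs_le_iff)
  hence "(2*(x - m*t))^2 \<le> m^2" using abs_le_square_iff by blast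
  moreover have "(2*(x - m*t))^2 = 4*(x-m*t)^2" by algebra
  ultimately show ?thesis by auto
qed

lemma prime_no_mid:
  fixes p m :: int assumes "prime p" "1 < m" "m < p" "m dvd p" shows False
proof -
  have "0 \<le> m" using assms(2) by simp
  hence "m = 1 \<or> m = p" using assms(1,4) unfolding prime_int_iff by blast
  thus False using assms(2,3) by linarith
qed

lemma descent:
  fixes p m :: int
  assumes p: "prime p" and m1: "1 < m" and mp: "m < p" and s: "sq4 (m*p)"
  shows "\<exists>r. 0 < r \<and> r < m \<and> sq4 (r*p)"
proof -
  obtain x1 x2 x3 x4 where xs: "m*p = x1^2+x2^2+x3^2+x4^2" using s sq4_def by blast
  have m0: "m > 0" using m1 by simp
  obtain t1 where t1: "4*(x1 - m*t1)^2 \<le> m^2" using symres[OF m0] by blast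
  obtain t2 where t2: "4*(x2 - m*t2)^2 \<le> m^2" using symres[OF m0] by blast
  obtain t3 where t3: "4*(x3 - m*t3)^2 \<le> m^2" using symres[OF m0] by blast
  obtain t4 where t4: "4*(x4 - m*t4)^2 \<le> m^2" using symres[OF m0] by blast
  define y1 where "y1 = x1 - m*t1"
  define y2 where "y2 = x2 - m*t2"
  define y3 where "y3 = x3 - m*t3"
  define y4 where "y4 = x4 - m*t4"
  define S where "S = y1^2+y2^2+y3^2+y4^2"
  have "S = m*p - m*(2*(x1*t1+x2*t2+x3*t3+x4*t4) - m*(t1^2+t2^2+t3^2+t4^2))"
    unfolding S_def y1_def y2_def y3_def y4_def xs by algebra
  hence "S = m * (p - (2*(x1*t1+x2*t2+x3*t3+x4*t4) - m*(t1^2+t2^2+t3^2+t4^2)))"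
    by algebra
  then obtain r where S: "S = m*r" by blast
  have S0: "S \<ge> 0" unfolding S_def by simp
  have ty: "4*y1^2 \<le> m^2" "4*y2^2 \<le> m^2" "4*y3^2 \<le> m^2" "4*y4^2 \<le> m^2"
    using t1 t2 t3 t4 unfolding y1_def y2_def y3_def y4_def by auto
  have S4: "4*S = 4*y1^2+4*y2^2+4*y3^2+4*y4^2" unfolding S_def by algebra
  have Sle: "4*S \<le> 4*m^2" using ty S4 by linarith
  have r0: "r \<ge> 0" using S S0 m0 by (simp add: zero_le_mult_iff)
  have "m*r \<le> m*m" using Sle S by (simp add: power2_eq_square)
  hence rm: "r \<le> m" using m0 by simp
  show ?thesis
  proof (cases "r = 0")
    case True
    hence "S = 0" using S by simp
    hence "y1 = 0" "y2 = 0" "y3 = 0" "y4 = 0" unfolding S_def by (auto simp: sum_power2_eq_zero_iff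
       add_nonneg_eq_0_iff)
    hence "m*p = m*(m*(t1^2+t2^2+t3^2+t4^2))" unfolding xs y1_def y2_def y3_def y4_def
      by algebra
    hence "m dvd p" using m0 by (metis dvd_triv_left mult_cancel_left less_irrefl)
    with prime_no_mid[OF p m1 mp] show ?thesis by blast
  next
    case rn0: False
    show ?thesis
    proof (cases "r = m")
      case True
      hence "4*S = 4*m^2" using S by (simp add: power2_eq_square)
      hence e0: "4*y1^2 = m^2" "4*y2^2 = m^2" "4*y3^2 = m^2" "4*y4^2 = m^2"
        using ty S4 by linarith+
      have "(2*y1)^2 = 4*y1^2" "(2*y2)^2 = 4*y2^2" "(2*y3)^2 = 4*y3^2" "(2*y4)^2 = 4*y4^2" by algebra+
      hence e: "(2*y1)^2 = m^2" "(2*y2)^2 = m^2" "(2*y3)^2 = m^2" "(2*y4)^2 = m^2"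
        using e0 by simp_all
      have "m dvd 2*y1" "m dvd 2*y2" "m dvd 2*y3" "m dvd 2*y4"
        using e by (metis power2_eq_iff dvd_refl dvd_minus_iff)+
      then obtain c1 c2 c3 c4 where c: "2*y1 = m*c1" "2*y2 = m*c2" "2*y3 = m*c3" "2*y4 = m*c4"
        by (meson dvdE)
      have hx: "2*x1 = m*(c1+2*t1)" "2*x2 = m*(c2+2*t2)" "2*x3 = m*(c3+2*t3)" "2*x4 = m*(c4+2*t4)"
        using c unfolding y1_def y2_def y3_def y4_def by algebra+
      have "4*S = (2*y1)^2+(2*y2)^2+(2*y3)^2+(2*y4)^2" unfolding S_def by (simp add: power2_eq_square)
      also have "\<dots> = m^2*(c1^2+c2^2+c3^2+c4^2)" unfolding c by algebra
      finally have cs: "c1^2+c2^2+c3^2+c4^2 = 4" using \<open>4*S = 4*m^2\<close> m0 by simp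
      have "4*(m*p) = (2*x1)^2+(2*x2)^2+(2*x3)^2+(2*x4)^2" unfolding xs by (simp add: power2_eq_square)
      also have "\<dots> = m^2*((c1+2*t1)^2+(c2+2*t2)^2+(c3+2*t3)^2+(c4+2*t4)^2)"
        unfolding hx by algebra
      also have "\<dots> = m^2*((c1^2+c2^2+c3^2+c4^2) + 4*(c1*t1+c2*t2+c3*t3+c4*t4+t1^2+t2^2+t3^2+t4^2))"
        by algebra
      also have "\<dots> = 4*(m*(m*(1+(c1*t1+c2*t2+c3*t3+c4*t4+t1^2+t2^2+t3^2+t4^2))))"
        unfolding cs by algebra
      finally have "p = m*(1+(c1*t1+c2*t2+c3*t3+c4*t4+t1^2+t2^2+t3^2+t4^2))" using m0 by simp
      hence "m dvd p" by (rule dvdI)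
      with prime_no_mid[OF p m1 mp] show ?thesis by blast
    next
      case False
      with rm rn0 r0 have r: "0 < r" "r < m" by auto
      define w1 where "w1 = p - (x1*t1+x2*t2+x3*t3+x4*t4)"
      define w2 where "w2 = x2*t1 - x1*t2 + x4*t3 - x3*t4"
      define w3 where "w3 = x3*t1 - x1*t3 + x2*t4 - x4*t2"
      define w4 where "w4 = x4*t1 - x1*t4 + x3*t2 - x2*t3"
      have z1: "x1*y1+x2*y2+x3*y3+x4*y4 = m*w1"
        unfolding y1_def y2_def y3_def y4_def w1_def
        using xs by algebra
      have z2: "x1*y2-x2*y1+x3*y4-x4*y3 = m*w2"
        unfolding y1_def y2_def y3_def y4_def w2_def by algebra
      have z3: "x1*y3-x2*y4-x3*y1+x4*y2 = m*w3"
        unfolding y1_def y2_def y3_def y4_def w3_def by algebra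
      have z4: "x1*y4+x2*y3-x3*y2-x4*y1 = m*w4"
        unfolding y1_def y2_def y3_def y4_def w4_def by algebra
      have "(m*p)*(m*r) = (m*w1)^2+(m*w2)^2+(m*w3)^2+(m*w4)^2"
        unfolding xs S[symmetric] S_def z1[symmetric] z2[symmetric] z3[symmetric] z4[symmetric]
        by (rule euler_id)
      also have "\<dots> = (m*m)*(w1^2+w2^2+w3^2+w4^2)" by algebra
      finally have "(m*m)*(r*p) = (m*m)*(w1^2+w2^2+w3^2+w4^2)" by algebra
      hence "r*p = w1^2+w2^2+w3^2+w4^2" using m0 by simp
      thus ?thesis using r unfolding sq4_def by blast
    qed
  qed
qed


lemma sqinj:
  fixes p a a' h :: int
  assumes p: "prime p" and "0 \<le> a" "a \<le> h" "0 \<le> a'" "a' \<le> h" "2*h < p" and d: "p dvd a^2 - a'^2"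
  shows "a = a'"
proof -
  have p0: "p > 0" using p prime_gt_0_int by blast
  have "a^2 - a'^2 = (a-a')*(a+a')" by algebra
  hence "p dvd (a-a') \<or> p dvd (a+a')" using p d prime_dvd_mult_iff by metis
  thus ?thesis
  proof
    assume h1: "p dvd a-a'"
    show ?thesis
    proof (rule ccontr)
      assume "a \<noteq> a'"
      hence "\<bar>p\<bar> \<le> \<bar>a-a'\<bar>" using h1 dvd_imp_le_int by simp
      thus False using assms p0 by linarith
    qed
  next
    assume h1: "p dvd a+a'"
    show ?thesis
    proof (rule ccontr)
      assume "a \<noteq> a'"
      hence "a + a' \<noteq> 0" using assms by linarith
      hence "\<bar>p\<bar> \<le> \<bar>a+a'\<bar>" using h1 dvd_imp_le_int by simp
      thus False using assms p0 by linarith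
    qed
  qed
qed

lemma exists_ab:
  fixes p :: int assumes p: "prime p" and p2: "p > 2"
  shows "\<exists>a b. 0 \<le> a \<and> 2*a < p \<and> 0 \<le> b \<and> 2*b < p \<and> p dvd a^2+b^2+1"
proof -
  have p0: "p > 0" using p2 by simp
  obtain k where k: "p = 2*k+1" using prime_odd_int[OF p p2] by (meson oddE)
  define A where "A = (\<lambda>a. a^2 mod p) ` {0..k}"
  define Bs where "Bs = (\<lambda>b. (-1-b^2) mod p) ` {0..k}"
  have injA: "inj_on (\<lambda>a. a^2 mod p) {0..k}"
  proof (rule inj_onI)
    fix a a' assume "a \<in> {0..k}" "a' \<in> {0..k}" "a^2 mod p = a'^2 mod p"
    thus "a = a'" using sqinj[OF p, of a k a'] k mod_eq_dvd_iff by auto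
  qed
  have injB: "inj_on (\<lambda>b. (-1-b^2) mod p) {0..k}"
  proof (rule inj_onI)
    fix a a' assume "a \<in> {0..k}" "a' \<in> {0..k}" "(-1-a^2) mod p = (-1-a'^2) mod p"
    hence "p dvd (-1-a'^2) - (-1-a^2)" using mod_eq_dvd_iff by metis
    moreover have "(-1-a'^2) - (-1-a^2) = a^2 - a'^2" by algebra
    ultimately show "a = a'" using sqinj[OF p, of a k a'] k \<open>a \<in> {0..k}\<close> \<open>a' \<in> {0..k}\<close> by auto
  qed
  have cA: "card A = nat (k+1)" unfolding A_def using card_image[OF injA] by simp
  have cB: "card Bs = nat (k+1)" unfolding Bs_def using card_image[OF injB] by simp
  have sub: "A \<union> Bs \<subseteq> {0..<p}" unfolding A_def Bs_def using p0 by auto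
  hence "card (A \<union> Bs) \<le> card {0..<p}" by (intro card_mono) auto
  hence cU: "card (A \<union> Bs) \<le> nat p" by simp
  have "A \<inter> Bs \<noteq> {}"
  proof
    assume "A \<inter> Bs = {}"
    hence "card (A \<union> Bs) = card A + card Bs" unfolding A_def Bs_def by (intro card_Un_disjoint) auto
    moreover have "nat (k+1) = nat k + 1" "nat p = 2*nat k + 1" using k p2 by (simp_all add: nat_add_distrib nat_mult_distrib)
    ultimately show False using cA cB cU by linarith
  qed
  then obtain v where "v \<in> A" "v \<in> Bs" by blast
  then obtain a b where ab0: "a \<in> {0..k}" "b \<in> {0..k}" "v = a^2 mod p" "v = (-1-b^2) mod p"
    unfolding A_def Bs_def by blast
  hence ab: "a \<in> {0..k}" "b \<in> {0..k}" "a^2 mod p = (-1-b^2) mod p" by auto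
  hence "p dvd a^2 - (-1-b^2)" using mod_eq_dvd_iff by metis
  moreover have "a^2 - (-1-b^2) = a^2+b^2+1" by algebra
  ultimately show ?thesis using ab k by (intro exI[of _ a] exI[of _ b]) auto
qed

lemma sq4_prime_aux:
  fixes p m :: int
  assumes p: "prime p" shows "0 < m \<Longrightarrow> m < p \<Longrightarrow> sq4 (m*p) \<Longrightarrow> sq4 p"
proof (induction "nat m" arbitrary: m rule: less_induct)
  case less
  show ?case
  proof (cases "m = 1")
    case True then show ?thesis using less.prems by simp
  next
    case False
    hence "1 < m" using less.prems by simp
    then obtain r where r: "0 < r" "r < m" "sq4 (r*p)" using descent[OF p _ less.prems(2,3)] by blast
    have "nat r < nat m" using r by simp
    thus ?thesis using less.hyps r less.prems by auto
  qed
qed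

lemma sq4_prime:
  fixes p :: int assumes p: "prime p" shows "sq4 p"
proof (cases "p = 2")
  case True
  have "(2::int) = 1^2+1^2+0^2+0^2" by simp
  thus ?thesis unfolding True sq4_def by blast
next
  case False
  hence p2: "p > 2" using prime_ge_2_int[OF p] by simp
  obtain a b where ab: "0 \<le> a" "2*a < p" "0 \<le> b" "2*b < p" "p dvd a^2+b^2+1"
    using exists_ab[OF p p2] by blast
  obtain m where m: "a^2+b^2+1 = p*m" using ab(5) by blast
  have "(2*a)^2 \<le> (p-1)^2" using ab by (intro power_mono) auto
  moreover have "(2*b)^2 \<le> (p-1)^2" using ab by (intro power_mono) auto
  moreover have "(2*a)^2 = 4*a^2" "(2*b)^2 = 4*b^2" "(p-1)^2 = p*p - 2*p + 1" by algebra+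
  moreover have "p*p \<ge> 2*p" using p2 by simp
  moreover have "4*(p*m) = 4*a^2+4*b^2+4" using m by algebra
  ultimately have "4*(p*m) < 4*(p*p)" using p2 by linarith
  hence mp: "m < p" using p2 by simp
  have "p*m > 0" unfolding m[symmetric] by (simp add: add_nonneg_pos)
  hence m0: "m > 0" using p2 by (simp add: zero_less_mult_iff)
  have "sq4 (m*p)" unfolding sq4_def by (rule exI[of _ a], rule exI[of _ b], rule exI[of _ 1], rule exI[of _ 0])
     (simp add: m mult.commute)
  thus ?thesis using sq4_prime_aux[OF p m0 mp] by blast
qed

lemma lagrange_int: "sq4 (int n)"
proof (induction n rule: less_induct)
  case (less n)
  show ?case
  proof (cases "n \<le> 1")
    case True
    hence "int n = (int n)^2 + 0^2 + 0^2 + 0^2" by (cases n) auto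
    thus ?thesis unfolding sq4_def by blast
  next
    case False
    then obtain p where p: "prime p" "p dvd n" using prime_factor_nat[of n] by auto
    then obtain k where k: "n = p*k" by blast
    have "p \<ge> 2" using p prime_ge_2_nat by blast
    moreover have "k > 0" using k False by (cases k) auto
    ultimately have "1*k < p*k" by (intro mult_strict_right_mono) auto
    hence "k < n" using k by simp
    hence "sq4 (int k)" using less by blast
    moreover have "sq4 (int p)" using p sq4_prime by simp
    ultimately show ?thesis using k sq4_mult by simp
  qed
qed

lemma lagrange_nat: "\<exists>a b c d :: nat. n = a^2+b^2+c^2+d^2"
proof -
  obtain a b c d where "int n = a^2+b^2+c^2+d^2" using lagrange_int sq4_def by blast
  hence "int n = int ((nat \<bar>a\<bar>)^2+(nat \<bar>b\<bar>)^2+(nat \<bar>c\<bar>)^2+(nat \<bar>d\<bar>)^2)" by simp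
  hence "n = (nat \<bar>a\<bar>)^2+(nat \<bar>b\<bar>)^2+(nat \<bar>c\<bar>)^2+(nat \<bar>d\<bar>)^2" by (simp only: of_nat_eq_iff)
  thus ?thesis by blast
qed


declare happyH.simps[simp del]

lemma H0: "happyH B 0 = 0"
  by (simp add: happyH.simps)

lemma Hrec: "B \<ge> 2 \<Longrightarrow> happyH B x = (x mod B)^2 + happyH B (x div B)"
  by (cases "x = 0") (simp_all add: happyH.simps[of B x] H0)

lemma H1: "B \<ge> 2 \<Longrightarrow> happyH B 1 = 1"
  using Hrec[of B 1] by (simp add: H0)

lemma HB: "B \<ge> 2 \<Longrightarrow> happyH B B = 1"
  using Hrec[of B B] H1[of B] by simp

fun val :: "nat \<Rightarrow> nat list \<Rightarrow> nat" where
  "val B [] = 0"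
| "val B (d#ds) = d + B * val B ds"

lemma H_val: "B \<ge> 2 \<Longrightarrow> \<forall>d\<in>set ds. d < B \<Longrightarrow> happyH B (val B ds) = sum_list (map (\<lambda>d. d^2) ds)"
proof (induction ds)
  case Nil then show ?case by (simp add: H0)
next
  case (Cons d ds)
  have "(d + B * val B ds) mod B = d" "(d + B * val B ds) div B = val B ds" using Cons.prems by auto
  thus ?case using Cons Hrec[of B "d + B * val B ds"] by simp
qed

lemma val_bound: "\<forall>d\<in>set ds. d < B \<Longrightarrow> val B ds < B^(length ds)"
proof (induction ds)
  case Nil then show ?case by simp
next
  case (Cons d ds)
  hence "val B ds + 1 \<le> B^(length ds)" "d < B" by auto
  hence "B * (val B ds + 1) \<le> B * B^(length ds)" by (intro mult_left_mono) auto
  thus ?case using \<open>d < B\<close> by simp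
qed

lemma H_bound: "B \<ge> 2 \<Longrightarrow> x < B^k \<Longrightarrow> happyH B x \<le> k*(B-1)^2"
proof (induction k arbitrary: x)
  case 0 then show ?case by (simp add: H0)
next
  case (Suc k)
  have "x mod B < B" using Suc.prems by simp
  hence "x mod B \<le> B - 1" by linarith
  hence a: "(x mod B)^2 \<le> (B-1)^2" by (intro power_mono) auto
  have "x div B < B^k" using Suc.prems by (simp add: div_less_iff_less_mult mult.commute)
  hence ih: "happyH B (x div B) \<le> k*(B-1)^2" using Suc by blast
  have "happyH B x \<le> (B-1)^2 + k*(B-1)^2" using Hrec[of B x] Suc.prems add_mono[OF a ih] by simp
  thus ?case by simp
qed

lemma height_step:
  assumes B: "B \<ge> 2" and hg: "happy B g" and ht: "height B g = n" and hz: "happyH B z = g" and z1: "z \<noteq> 1"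
  shows "z \<ge> 1 \<and> happy B z \<and> height B z = Suc n"
proof -
  have g0: "g > 0" and ex: "\<exists>k. (happyH B ^^ k) g = 1" using hg unfolding happy_def by auto
  have gn: "(happyH B ^^ n) g = 1" using LeastI_ex[OF ex] ht unfolding height_def by simp
  have gmin: "n \<le> k" if "(happyH B ^^ k) g = 1" for k
    unfolding ht[symmetric] height_def by (rule Least_le) (rule that)
  have z0: "z \<ge> 1" using hz g0 H0 by (cases z) auto
  have sr: "(happyH B ^^ Suc k) z = (happyH B ^^ k) g" for k
    unfolding hz[symmetric] by (simp only: funpow_Suc_right comp_def)
  have zn: "(happyH B ^^ Suc n) z = 1" using gn sr by simp
  have "height B z = Suc n" unfolding height_def
  proof (rule Least_equality)
    show "(happyH B ^^ Suc n) z = 1" by (rule zn)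
  next
    fix y assume y: "(happyH B ^^ y) z = 1"
    show "Suc n \<le> y"
    proof (cases y)
      case 0 then show ?thesis using y z1 by simp
    next
      case (Suc y')
      hence "(happyH B ^^ y') g = 1" using y sr by simp
      thus ?thesis using gmin Suc by simp
    qed
  qed
  moreover have "happy B z" unfolding happy_def using z0 zn by (intro conjI exI[of _ "Suc n"]) simp_all
  ultimately show ?thesis using z0 by blast
qed

lemma exists_height: "B \<ge> 2 \<Longrightarrow> \<exists>x. x \<ge> 1 \<and> happy B x \<and> height B x = n"
proof (induction n)
  case 0
  have "happy B 1" unfolding happy_def by (auto intro: exI[of _ 0])
  moreover have "height B 1 = 0" unfolding height_def by (rule Least_eq_0) simp
  ultimately show ?case by blast
next
  case (Suc n)
  then obtain y where y: "y \<ge> 1" "happy B y" "height B y = n" by blast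
  show ?case
  proof (cases "y = 1")
    case True
    have "B \<noteq> 1" using Suc.prems by simp
    hence "B \<ge> 1 \<and> happy B B \<and> height B B = Suc n"
      using height_step[OF Suc.prems y(2,3), of B] HB[OF Suc.prems] True by blast
    thus ?thesis by blast
  next
    case False
    have "happyH B (val B (replicate y 1)) = y" using H_val[OF Suc.prems, of "replicate y 1"] Suc.prems
      by (simp add: sum_list_replicate)
    moreover have "val B (replicate y 1) \<noteq> 1" using calculation False H1[OF Suc.prems] by auto
    ultimately show ?thesis using height_step[OF Suc.prems y(2,3)] by blast
  qed
qed

lemma gamma_P: "B \<ge> 2 \<Longrightarrow> gamma B n \<ge> 1 \<and> happy B (gamma B n) \<and> height B (gamma B n) = n"
  unfolding gamma_def using LeastI_ex[OF exists_height] by blast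

lemma gamma_le: "x \<ge> 1 \<Longrightarrow> happy B x \<Longrightarrow> height B x = n \<Longrightarrow> gamma B n \<le> x"
  unfolding gamma_def by (rule Least_le) blast

theorem lemma2p6:
  fixes B \<eta> :: nat
  assumes "B \<ge> 2"
  shows "happyH B (gamma B (\<eta> + 1)) \<le> gamma B \<eta> + 4 * (B - 1)^2"
proof (rule ccontr)
  assume neg: "\<not> ?thesis"
  define g where "g = gamma B \<eta>"
  define x where "x = gamma B (\<eta>+1)"
  define c where "c = (B-1)^2"
  have c1: "c \<ge> 1" unfolding c_def using assms by simp
  have Pg: "g \<ge> 1" "happy B g" "height B g = \<eta>" using gamma_P[OF assms] unfolding g_def by auto
  have Px: "x \<ge> 1" using gamma_P[OF assms] unfolding x_def by auto
  have yg: "happyH B x > g + 4*c" using neg unfolding x_def g_def c_def by simp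
  have exL: "\<exists>L. x < B^L"
  proof -
    have "x < 2^x" by (rule less_exp)
    also have "\<dots> \<le> B^x" using assms by (intro power_mono) auto
    finally show ?thesis by blast
  qed
  define L where "L = (LEAST L. x < B^L)"
  have xL: "x < B^L" unfolding L_def by (rule LeastI_ex[OF exL])
  have L0: "L \<noteq> 0" using xL Px by (cases L) auto
  have xL1: "B^(L-1) \<le> x" using not_less_Least[of "L-1" "\<lambda>L. x < B^L"] L0 unfolding L_def[symmetric]
    by (simp add: not_less)
  have yL: "happyH B x \<le> L*c" using H_bound[OF assms xL] unfolding c_def .
  define q where "q = g div c"
  define r where "r = g mod c"
  have gqr: "g = q*c + r" unfolding q_def r_def by simp
  have rc: "r < c" unfolding r_def using c1 by simp
  have "(q+4)*c < L*c" using yL yg gqr by (simp add: algebra_simps)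
  hence "q + 4 < L" by (simp add: mult_less_cancel2)
  hence qL: "q + 4 \<le> L - 1" by linarith
  obtain a b c' d :: nat where abcd: "r = a^2+b^2+c'^2+d^2" using lagrange_nat by blast
  have dig: "\<And>t. t^2 \<le> r \<Longrightarrow> t < B"
  proof -
    fix t :: nat assume "t^2 \<le> r"
    hence "t^2 < (B-1)^2" using rc unfolding c_def by simp
    hence "t < B - 1" using power_less_imp_less_base by blast
    thus "t < B" by simp
  qed
  define ds where "ds = [a,b,c',d] @ replicate q (B-1)"
  have dsB: "\<forall>e\<in>set ds. e < B" unfolding ds_def using dig abcd assms
    by (auto simp: le_add1 trans_le_add2)
  have Hds: "happyH B (val B ds) = g" using H_val[OF assms dsB] unfolding ds_def gqr abcd c_def
    by (simp add: sum_list_replicate algebra_simps)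
  have lds: "length ds = q+4" unfolding ds_def by simp
  have "val B ds < B^(q+4)" using val_bound[OF dsB] unfolding lds .
  also have "\<dots> \<le> B^(L-1)" using qL assms by (intro power_increasing) auto
  finally have vx: "val B ds < x" using xL1 by simp
  obtain z where z: "happyH B z = g" "z \<noteq> 1" "z < x"
  proof (cases "val B ds = 1")
    case True
    hence g1: "g = 1" using Hds H1[OF assms] by simp
    have "B < B^2" using assms by (simp add: power2_eq_square)
    also have "\<dots> \<le> B^(L-1)" using qL assms by (intro power_increasing) auto
    finally have "B < x" using xL1 by simp
    thus ?thesis using that[of B] HB[OF assms] g1 assms by simp
  next
    case False
    thus ?thesis using that[of "val B ds"] Hds vx by simp
  qed
  have "z \<ge> 1 \<and> happy B z \<and> height B z = Suc \<eta>" using height_step[OF assms Pg(2,3) z(1,2)] .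
  hence "x \<le> z" unfolding x_def using gamma_le by simp
  thus False using z(3) by simp
qed

end
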